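(* Let $\gamma$ be a closed path in a reduced Rauzy diagram whose associated matrix $V(\gamma)$ is primitive. Assume there is a lift $\hat\gamma$ of $\gamma$ in the labeled Rauzy diagram that contains every letter of the alphabet as loser, or contains every letter as winner. Then the Perron–Frobenius eigenvalue of $V(\gamma)$ is at least $2$.
   Context: Fix a finite alphabet $\mathcal A$ with $d\ge2$ letters. A labeled permutation is a pair $\pi=(\pi_t,\pi_b)$ of bijections $\mathcal A\to\{1,\dots,d\}$. The Rauzy moves are: $\mathcal R_t(\pi)=(\pi_t,\pi_b')$ where, with $k$ such that $\pi_b^{-1}(k)=\pi_t^{-1}(d)$, $\pi_b'^{-1}(j)=\pi_b^{-1}(j)$ for $j\le k$, $\pi_b'^{-1}(k+1)=\pi_b^{-1}(d)$, $\pi_b'^{-1}(j)=\pi_b^{-1}(j-1)$ for $j>k+1$; its winner is $\pi_t^{-1}(d)$ and loser $\pi_b^{-1}(d)$. Symmetrically $\mathcal R_b(\pi)=(\pi_t',\pi_b)$ with the roles of $t,b$ exchanged; its winner is $\pi_b^{-1}(d)$ and loser $\pi_t^{-1}(d)$. The labeled Rauzy diagram of an (irreducible) $\pi$ is the directed graph whose vertices are all labeled permutations obtainable from $\pi$ by Rauzy moves and whose edges $\pi\xrightarrow{\alpha,\beta}\pi'$ are the moves, labeled by winner $\alpha$ and loser $\beta$. A path contains a letter as winner (loser) if one of its edges has that letter as winner (loser). To a labeled path with successive winner/loser pairs $(\alpha_k,\beta_k)_{k=1}^n$ one associates $\hat V=\prod_{k=1}^n(I+E_{\alpha_k\beta_k})$,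 where $E_{\alpha\beta}$ is the elementary matrix with a single $1$ in position $(\alpha,\beta)$. The reduced Rauzy diagram is obtained by identifying labeled permutations $(\pi_t,\pi_b),(\pi_t',\pi_b')$ with $\pi_b\circ\pi_t^{-1}=\pi_b'\circ\pi_t'^{-1}$; the labeled diagram covers it. For a closed path $\gamma$ in the reduced diagram, take its lift $\hat\gamma$ starting at the labeled representative with $\pi_t=\mathrm{Id}$ (alphabet $\{1,\dots,d\}$), ending at some $(\pi_t',\pi_b')$; then $V(\gamma)=\hat V(\hat\gamma)\,P$ where $P=[p_{ij}]$ with $p_{ij}=1$ iff $j=\pi_t'(i)$ and $0$ otherwise (for other lifts, $P$ is the analogous permutation matrix relating start and end labelings). A nonnegative matrix is primitive if some power has all entries positive. *)

theory Defs
  imports "Jordan_Normal_Form.Spectral_Radius" "HOL-Combinatorics.Permutations"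
begin

(* Alphabet = {1..d} (natural numbers).  A labeled permutation is a pair (pt, pb)
   of permutations of {1..d} (functions permuting {1..d}, identity outside). *)

type_synonym lperm = "(nat \<Rightarrow> nat) \<times> (nat \<Rightarrow> nat)"

definition is_lperm :: "nat \<Rightarrow> lperm \<Rightarrow> bool" where
  "is_lperm d PI \<longleftrightarrow> fst PI permutes {1..d} \<and> snd PI permutes {1..d}"

definition irreducible_lperm :: "nat \<Rightarrow> lperm \<Rightarrow> bool" where
  "irreducible_lperm d PI \<longleftrightarrow>
     (\<forall>k. 1 \<le> k \<and> k < d \<longrightarrow> inv_into UNIV (fst PI) ` {1..k} \<noteq> inv_into UNIV (snd PI) ` {1..k})"

datatype move = Top | Bot

definition insert_after :: "nat \<Rightarrow> nat \<Rightarrow> (nat \<Rightarrow> nat) \<Rightarrow> (nat \<Rightarrow> nat)" where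
  "insert_after d k q = inv_into UNIV (\<lambda>j. if 1 \<le> j \<and> j \<le> d then
        (if j \<le> k then inv_into UNIV q j else if j = k + 1 then inv_into UNIV q d else inv_into UNIV q (j - 1))
      else j)"

fun rauzy :: "nat \<Rightarrow> move \<Rightarrow> lperm \<Rightarrow> lperm" where
  "rauzy d Top (pt, pb) = (pt, insert_after d (pb (inv_into UNIV pt d)) pb)"
| "rauzy d Bot (pt, pb) = (insert_after d (pt (inv_into UNIV pb d)) pt, pb)"

fun winner :: "nat \<Rightarrow> move \<Rightarrow> lperm \<Rightarrow> nat" where
  "winner d Top (pt, pb) = inv_into UNIV pt d"
| "winner d Bot (pt, pb) = inv_into UNIV pb d"

fun loser :: "nat \<Rightarrow> move \<Rightarrow> lperm \<Rightarrow> nat" where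
  "loser d Top (pt, pb) = inv_into UNIV pb d"
| "loser d Bot (pt, pb) = inv_into UNIV pt d"

definition path_end :: "nat \<Rightarrow> lperm \<Rightarrow> move list \<Rightarrow> lperm" where
  "path_end d PI ts = foldl (\<lambda>S t. rauzy d t S) PI ts"

fun path_labels :: "nat \<Rightarrow> lperm \<Rightarrow> move list \<Rightarrow> (nat \<times> nat) list" where
  "path_labels d PI [] = []"
| "path_labels d PI (t # ts) = (winner d t PI, loser d t PI) # path_labels d (rauzy d t PI) ts"

(* reduced permutation pb \<circ> pt^{-1}; a vertex of the reduced Rauzy diagram *)
definition reduce :: "lperm \<Rightarrow> (nat \<Rightarrow> nat)" where
  "reduce PI = snd PI \<circ> inv_into UNIV (fst PI)"

definition in_reduced_rauzy_diagram :: "nat \<Rightarrow> (nat \<Rightarrow> nat) \<Rightarrow> bool" where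
  "in_reduced_rauzy_diagram d p \<longleftrightarrow>
     (\<exists>P0 ts. is_lperm d P0 \<and> irreducible_lperm d P0 \<and> reduce (path_end d P0 ts) = p)"

(* a closed path in the reduced diagram: start vertex p and the sequence of move types;
   the moves of the reduced diagram are images of labeled moves (compatible with relabeling) *)
definition closed_reduced_path :: "nat \<Rightarrow> (nat \<Rightarrow> nat) \<Rightarrow> move list \<Rightarrow> bool" where
  "closed_reduced_path d p ts \<longleftrightarrow>
     p permutes {1..d} \<and> in_reduced_rauzy_diagram d p \<and> reduce (path_end d (id, p) ts) = p"

(* lifts of the reduced path: labeled paths starting at a labeled representative of p *)
definition is_lift_start :: "nat \<Rightarrow> (nat \<Rightarrow> nat) \<Rightarrow> lperm \<Rightarrow> bool" where
  "is_lift_start d p PI \<longleftrightarrow> is_lperm d PI \<and> reduce PI = p"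

(* Matrices: letter i \<in> {1..d} corresponds to row/column index i - 1 *)
definition elem_mat :: "nat \<Rightarrow> nat \<Rightarrow> nat \<Rightarrow> nat mat" where
  "elem_mat d a b = mat d d (\<lambda>(i, j). if i + 1 = a \<and> j + 1 = b then 1 else 0)"

definition Vhat :: "nat \<Rightarrow> (nat \<times> nat) list \<Rightarrow> nat mat" where
  "Vhat d ls = foldl (\<lambda>M (a, b). M * (1\<^sub>m d + elem_mat d a b)) (1\<^sub>m d) ls"

definition perm_matrix :: "nat \<Rightarrow> (nat \<Rightarrow> nat) \<Rightarrow> nat mat" where
  "perm_matrix d pt = mat d d (\<lambda>(i, j). if j + 1 = pt (i + 1) then 1 else 0)"

definition V_mat :: "nat \<Rightarrow> (nat \<Rightarrow> nat) \<Rightarrow> move list \<Rightarrow> nat mat" where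
  "V_mat d p ts = Vhat d (path_labels d (id, p) ts) * perm_matrix d (fst (path_end d (id, p) ts))"

definition primitive_mat :: "nat mat \<Rightarrow> bool" where
  "primitive_mat A \<longleftrightarrow> (\<exists>k. \<forall>i < dim_row A. \<forall>j < dim_col A. (A ^\<^sub>m k) $$ (i, j) > 0)"

(* Perron--Frobenius eigenvalue of a primitive matrix = its spectral radius *)
definition pf_eigenvalue :: "nat mat \<Rightarrow> real" where
  "pf_eigenvalue A = spectral_radius (map_mat of_nat A)"

end

theory Submission
  imports Defs
begin

definition cyc :: "nat \<Rightarrow> nat \<Rightarrow> nat \<Rightarrow> nat" where
  "cyc d k j = (if 1 \<le> j \<and> j \<le> d then (if j \<le> k then j else if j = k + 1 then d else j - 1) else j)"
definition cinv :: "nat \<Rightarrow> nat \<Rightarrow> nat \<Rightarrow> nat" where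
  "cinv d k j = (if 1 \<le> j \<and> j \<le> d then (if j \<le> k then j else if j = d then k + 1 else j + 1) else j)"

lemma cyc_cinv: "1 \<le> k \<Longrightarrow> k \<le> d \<Longrightarrow> cyc d k (cinv d k j) = j"
  unfolding cyc_def cinv_def by auto
lemma cinv_cyc: "1 \<le> k \<Longrightarrow> k \<le> d \<Longrightarrow> cinv d k (cyc d k j) = j"
  unfolding cyc_def cinv_def by auto

lemma cyc_bij: "1 \<le> k \<Longrightarrow> k \<le> d \<Longrightarrow> bij (cyc d k)"
  by (metis bij_betw_byWitness cinv_cyc cyc_cinv iso_tuple_UNIV_I subset_UNIV)

lemma inv_cyc: "1 \<le> k \<Longrightarrow> k \<le> d \<Longrightarrow> inv_into UNIV (cyc d k) = cinv d k"
  by (rule inv_unique_comp) (auto simp: fun_eq_iff cyc_cinv cinv_cyc)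

lemma cinv_permutes: "1 \<le> k \<Longrightarrow> k \<le> d \<Longrightarrow> cinv d k permutes {1..d}"
  unfolding permutes_def
  apply (intro conjI allI impI)
   apply (simp add: cinv_def)
  by (metis cinv_cyc cyc_cinv)

lemma insert_after_eq:
  assumes q: "q permutes {1..d}" and k: "1 \<le> k" "k \<le> d"
  shows "insert_after d k q = cinv d k \<circ> q"
proof -
  have iq: "inv_into UNIV q permutes {1..d}" using permutes_inv[OF q] .
  have h: "(\<lambda>j. if 1 \<le> j \<and> j \<le> d then
        (if j \<le> k then inv_into UNIV q j else if j = k + 1 then inv_into UNIV q d else inv_into UNIV q (j - 1))
      else j) = inv_into UNIV q \<circ> cyc d k"
    using permutes_not_in[OF iq] by (auto simp: fun_eq_iff cyc_def)
  have "insert_after d k q = inv_into UNIV (inv_into UNIV q \<circ> cyc d k)"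
    unfolding insert_after_def h by simp
  also have "\<dots> = inv_into UNIV (cyc d k) \<circ> inv_into UNIV (inv_into UNIV q)"
    by (rule o_inv_distrib) (auto intro: cyc_bij[OF k] permutes_bij[OF iq])
  also have "\<dots> = cinv d k \<circ> q" using inv_cyc[OF k] permutes_inv_inv[OF q] by simp
  finally show ?thesis .
qed

lemma lperm_in: "is_lperm d (pt, pb) \<Longrightarrow> d \<ge> 1 \<Longrightarrow> inv_into UNIV pt d \<in> {1..d} \<and> inv_into UNIV pb d \<in> {1..d}
   \<and> pb (inv_into UNIV pt d) \<in> {1..d} \<and> pt (inv_into UNIV pb d) \<in> {1..d}"
proof -
  assume l: "is_lperm d (pt, pb)" and d1: "d \<ge> 1"
  have pt: "pt permutes {1..d}" and pb: "pb permutes {1..d}" using l unfolding is_lperm_def by auto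
  have d: "d \<in> {1..d}" using d1 by simp
  have a: "inv_into UNIV pt d \<in> {1..d}" using permutes_in_image[OF permutes_inv[OF pt]] d by blast
  have b: "inv_into UNIV pb d \<in> {1..d}" using permutes_in_image[OF permutes_inv[OF pb]] d by blast
  show ?thesis using a b permutes_in_image[OF pt] permutes_in_image[OF pb] by blast
qed

lemma rauzy_eq:
  assumes "is_lperm d (pt, pb)" "d \<ge> 1"
  shows "rauzy d Top (pt, pb) = (pt, cinv d (pb (inv_into UNIV pt d)) \<circ> pb)"
    "rauzy d Bot (pt, pb) = (cinv d (pt (inv_into UNIV pb d)) \<circ> pt, pb)"
  using lperm_in[OF assms] assms(1) unfolding is_lperm_def
  by (auto simp: insert_after_eq)

lemma rauzy_lperm:
  assumes "is_lperm d PI" "d \<ge> 1"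
  shows "is_lperm d (rauzy d t PI)"
proof -
  obtain pt pb where P: "PI = (pt, pb)" by force
  note l = assms(1)[unfolded P]
  have pt: "pt permutes {1..d}" and pb: "pb permutes {1..d}" using l unfolding is_lperm_def by auto
  note i = lperm_in[OF l assms(2)]
  have c1: "cinv d (pb (inv_into UNIV pt d)) permutes {1..d}"
    by (rule cinv_permutes) (use i in auto)
  have c2: "cinv d (pt (inv_into UNIV pb d)) permutes {1..d}"
    by (rule cinv_permutes) (use i in auto)
  show ?thesis
  proof (cases t)
    case Top
    then show ?thesis using rauzy_eq[OF l assms(2)] permutes_compose[OF pb c1] pt
      unfolding P is_lperm_def by simp
  next
    case Bot
    then show ?thesis using rauzy_eq[OF l assms(2)] permutes_compose[OF pt c2] pb
      unfolding P is_lperm_def by simp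
  qed
qed

lemma rauzy_relabel:
  assumes "is_lperm d (pt, pb)" "d \<ge> 1" and s: "s permutes {1..d}"
  shows "rauzy d t (pt \<circ> s, pb \<circ> s) = (fst (rauzy d t (pt, pb)) \<circ> s, snd (rauzy d t (pt, pb)) \<circ> s)"
    "winner d t (pt \<circ> s, pb \<circ> s) = inv_into UNIV s (winner d t (pt, pb))"
    "loser d t (pt \<circ> s, pb \<circ> s) = inv_into UNIV s (loser d t (pt, pb))"
proof -
  have l2: "is_lperm d (pt \<circ> s, pb \<circ> s)" using assms unfolding is_lperm_def
    by (auto intro: permutes_compose)
  have i1: "inv_into UNIV (pt \<circ> s) = inv_into UNIV s \<circ> inv_into UNIV pt" "inv_into UNIV (pb \<circ> s) = inv_into UNIV s \<circ> inv_into UNIV pb"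
    using assms unfolding is_lperm_def by (auto intro!: o_inv_distrib permutes_bij s)
  have e1: "s (inv_into UNIV s x) = x" for x using permutes_inverses[OF s] by simp
  show "rauzy d t (pt \<circ> s, pb \<circ> s) = (fst (rauzy d t (pt, pb)) \<circ> s, snd (rauzy d t (pt, pb)) \<circ> s)"
    using rauzy_eq[OF assms(1,2)] rauzy_eq[OF l2 assms(2)]
    by (cases t) (auto simp: i1 e1)
  show "winner d t (pt \<circ> s, pb \<circ> s) = inv_into UNIV s (winner d t (pt, pb))"
    by (cases t) (auto simp: i1)
  show "loser d t (pt \<circ> s, pb \<circ> s) = inv_into UNIV s (loser d t (pt, pb))"
    by (cases t) (auto simp: i1)
qed

lemma labels_relabel:
  assumes "d \<ge> 1" and s: "s permutes {1..d}"
  shows "is_lperm d (pt, pb) \<Longrightarrow> path_labels d (pt \<circ> s, pb \<circ> s) ts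
     = map (map_prod (inv_into UNIV s) (inv_into UNIV s)) (path_labels d (pt, pb) ts)"
proof (induction ts arbitrary: pt pb)
  case Nil
  then show ?case by simp
next
  case (Cons t ts)
  obtain a b where R: "rauzy d t (pt, pb) = (a, b)" by force
  have "is_lperm d (a, b)" using rauzy_lperm[OF Cons.prems assms(1), of t] R by simp
  note rr = rauzy_relabel[OF Cons.prems assms(1) s, of t]
  have e: "rauzy d t (pt \<circ> s, pb \<circ> s) = (a \<circ> s, b \<circ> s)" using rr(1) R by simp
  have "path_labels d (pt \<circ> s, pb \<circ> s) (t # ts) = (winner d t (pt \<circ> s, pb \<circ> s), loser d t (pt \<circ> s, pb \<circ> s)) # path_labels d (a \<circ> s, b \<circ> s) ts"
    by (simp only: path_labels.simps e)
  also have "\<dots> = map (map_prod (inv_into UNIV s) (inv_into UNIV s)) (path_labels d (pt, pb) (t # ts))"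
    by (simp only: rr(2,3) Cons.IH[OF \<open>is_lperm d (a, b)\<close>] path_labels.simps R list.map map_prod_simp)
  finally show ?case .
qed

lemma labels_in:
  assumes "d \<ge> 1"
  shows "is_lperm d PI \<Longrightarrow> (a, b) \<in> set (path_labels d PI ts) \<Longrightarrow> a \<in> {1..d} \<and> b \<in> {1..d}"
proof (induction ts arbitrary: PI)
  case Nil
  then show ?case by simp
next
  case (Cons t ts)
  obtain pt pb where P: "PI = (pt, pb)" by force
  show ?case using Cons rauzy_lperm[OF Cons.prems(1) assms, of t] lperm_in[OF Cons.prems(1)[unfolded P] assms]
    unfolding P by (cases t) auto
qed

lemma path_end_lperm:
  assumes "d \<ge> 1"
  shows "is_lperm d PI \<Longrightarrow> is_lperm d (path_end d PI ts)"
  unfolding path_end_def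
proof (induction ts arbitrary: PI)
  case Nil
  then show ?case by simp
next
  case (Cons t ts)
  show ?case using Cons.IH[OF rauzy_lperm[OF Cons.prems assms, of t]] by simp
qed


lemma map_mat_of_nat_pow:
  fixes V :: "nat mat"
  assumes V: "V \<in> carrier_mat d d"
  shows "map_mat (of_nat :: nat \<Rightarrow> complex) (V ^\<^sub>m k) = (map_mat of_nat V) ^\<^sub>m k"
proof -
  interpret h: semiring_hom "of_nat :: nat \<Rightarrow> complex" by unfold_locales auto
  show ?thesis using h.mat_hom_pow[OF V] .
qed

lemma smult_pow_mat:
  fixes A :: "complex mat"
  assumes A: "A \<in> carrier_mat d d"
  shows "(a \<cdot>\<^sub>m A) ^\<^sub>m k = (a ^ k) \<cdot>\<^sub>m (A ^\<^sub>m k)"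
proof (induction k)
  case 0
  then show ?case using A by (auto intro!: eq_matI)
next
  case (Suc k)
  have "(a \<cdot>\<^sub>m A) ^\<^sub>m Suc k = (a ^ k \<cdot>\<^sub>m A ^\<^sub>m k) * (a \<cdot>\<^sub>m A)" using Suc by simp
  also have "\<dots> = a ^ k \<cdot>\<^sub>m (A ^\<^sub>m k * (a \<cdot>\<^sub>m A))"
    by (rule mult_smult_assoc_mat[of _ d d _ d]) (use A in auto)
  also have "\<dots> = a ^ k \<cdot>\<^sub>m (a \<cdot>\<^sub>m (A ^\<^sub>m k * A))"
    using mult_smult_distrib[of "A ^\<^sub>m k" d d A d a] A by auto
  also have "\<dots> = (a ^ Suc k) \<cdot>\<^sub>m (A ^\<^sub>m Suc k)"
    by (auto intro!: eq_matI simp: ac_simps)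
  finally show ?case .
qed

lemma sr_ge:
  fixes V :: "nat mat"
  assumes V: "V \<in> carrier_mat d d" and d: "d > 0"
    and grow: "\<forall>k. \<exists>i<d. \<exists>j<d. (2::real) ^ k \<le> real d * real ((V ^\<^sub>m k) $$ (i, j))"
  shows "spectral_radius (map_mat of_nat V) \<ge> 2"
proof (rule ccontr)
  define A where "A = map_mat (of_nat :: nat \<Rightarrow> complex) V"
  have A: "A \<in> carrier_mat d d" using V unfolding A_def by auto
  define \<rho> where "\<rho> = spectral_radius A"
  assume "\<not> 2 \<le> spectral_radius (map_mat of_nat V)"
  hence r2: "\<rho> < 2" unfolding \<rho>_def A_def by simp
  have r0: "\<rho> \<ge> 0" using spectral_radius_mem_max(1)[OF A d] unfolding \<rho>_def by auto
  define c where "c = (\<rho> + 2) / 2"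
  have c0: "c > 0" and rc: "\<rho> < c" and c2: "c < 2" using r0 r2 unfolding c_def by auto
  define B where "B = complex_of_real (1 / c) \<cdot>\<^sub>m A"
  have B: "B \<in> carrier_mat d d" using A unfolding B_def by auto
  have srB: "spectral_radius B < 1"
  proof -
    from spectral_radius_mem_max(1)[OF B d] obtain \<mu> where mu: "\<mu> \<in> spectrum B"
      and eq: "spectral_radius B = norm \<mu>" by auto
    from mu obtain v where ev: "eigenvector B v \<mu>" unfolding spectrum_def eigenvalue_def by auto
    have v: "v \<in> carrier_vec d" "v \<noteq> 0\<^sub>v d" "B *\<^sub>v v = \<mu> \<cdot>\<^sub>v v"
      using ev B unfolding eigenvector_def by auto
    have "A *\<^sub>v v = (complex_of_real c * \<mu>) \<cdot>\<^sub>v v"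
    proof (rule eq_vecI)
      fix i assume i: "i < dim_vec ((complex_of_real c * \<mu>) \<cdot>\<^sub>v v)"
      hence i': "i < d" using v by auto
      have "(B *\<^sub>v v) $ i = complex_of_real (1 / c) * (A *\<^sub>v v) $ i"
        using i' A B v(1) unfolding B_def by (auto simp: scalar_prod_def sum_distrib_left ac_simps)
      moreover have "(B *\<^sub>v v) $ i = \<mu> * v $ i" using v(3) i' v(1) by (metis carrier_vecD index_smult_vec(1))
      ultimately have "(A *\<^sub>v v) $ i = complex_of_real c * (\<mu> * v $ i)"
        using c0 by (metis mult.assoc mult.commute nonzero_mult_div_cancel_right of_real_1 of_real_divide of_real_eq_0_iff times_divide_eq_right div_by_1 less_irrefl divide_self_if mult_1)
      then show "(A *\<^sub>v v) $ i = ((complex_of_real c * \<mu>) \<cdot>\<^sub>v v) $ i" using i' v by auto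
    next
      show "dim_vec (A *\<^sub>v v) = dim_vec ((complex_of_real c * \<mu>) \<cdot>\<^sub>v v)" using A v by auto
    qed
    hence "eigenvector A v (complex_of_real c * \<mu>)" using v A unfolding eigenvector_def by auto
    hence "norm (complex_of_real c * \<mu>) \<in> norm ` spectrum A" unfolding spectrum_def eigenvalue_def by auto
    from spectral_radius_mem_max(2)[OF A d this] have "c * norm \<mu> \<le> \<rho>"
      using c0 unfolding \<rho>_def by (simp add: norm_mult)
    hence "c * norm \<mu> < c * 1" using rc by simp
    hence "norm \<mu> < 1" using c0 by (simp only: mult_less_cancel_left_pos)
    thus ?thesis using eq by simp
  qed
  from spectral_radius_jnf_norm_bound_less_1_upper_triangular[OF B srB]
  obtain C where C: "\<And>k. norm_bound (B ^\<^sub>m k) C" by auto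
  have bound: "(2 / c) ^ k \<le> real d * C" for k
  proof -
    obtain i j where ij: "i < d" "j < d" and g: "(2::real) ^ k \<le> real d * real ((V ^\<^sub>m k) $$ (i, j))"
      using grow by blast
    have "B ^\<^sub>m k = complex_of_real (1 / c) ^ k \<cdot>\<^sub>m (A ^\<^sub>m k)" unfolding B_def
      by (rule smult_pow_mat[OF A])
    also have "A ^\<^sub>m k = map_mat of_nat (V ^\<^sub>m k)" unfolding A_def using map_mat_of_nat_pow[OF V] by simp
    finally have Bk: "B ^\<^sub>m k = complex_of_real (1 / c) ^ k \<cdot>\<^sub>m map_mat of_nat (V ^\<^sub>m k)" .
    have "norm ((B ^\<^sub>m k) $$ (i, j)) \<le> C" using C[of k] ij B unfolding norm_bound_def by auto
    moreover have "(B ^\<^sub>m k) $$ (i, j) = complex_of_real ((1 / c) ^ k * real ((V ^\<^sub>m k) $$ (i, j)))"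
      unfolding Bk using ij V by simp
    ultimately have "(1 / c) ^ k * real ((V ^\<^sub>m k) $$ (i, j)) \<le> C"
      using c0 by (simp add: norm_mult norm_power norm_divide)
    hence "real d * ((1 / c) ^ k * real ((V ^\<^sub>m k) $$ (i, j))) \<le> real d * C"
      by (rule mult_left_mono) simp
    moreover have "(2 / c) ^ k = (1 / c) ^ k * 2 ^ k" by (simp add: power_divide)
    moreover have "(1 / c) ^ k * 2 ^ k \<le> (1 / c) ^ k * (real d * real ((V ^\<^sub>m k) $$ (i, j)))"
      using g c0 by (intro mult_left_mono) auto
    ultimately show ?thesis by (simp add: ac_simps)
  qed
  have "1 < 2 / c" using c0 c2 by simp
  from real_arch_pow[OF this, of "real d * C"] obtain n where "real d * C < (2 / c) ^ n" by auto
  with bound[of n] show False by simp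
qed


definition csum :: "nat mat \<Rightarrow> nat \<Rightarrow> nat \<Rightarrow> nat" where
  "csum M d j = (\<Sum>i<d. M $$ (i, j))"
definition rsum :: "nat mat \<Rightarrow> nat \<Rightarrow> nat \<Rightarrow> nat" where
  "rsum M d i = (\<Sum>j<d. M $$ (i, j))"


lemma step_entry:
  assumes M: "M \<in> carrier_mat d d" and a: "a \<in> {1..d}" and ij: "i < d" "j < d"
  shows "(M * (1\<^sub>m d + elem_mat d a b)) $$ (i, j) = M $$ (i, j) + (if j + 1 = b then M $$ (i, a - 1) else 0)"
proof -
  have "(M * (1\<^sub>m d + elem_mat d a b)) $$ (i, j) =
     (\<Sum>l<d. M $$ (i, l) * ((if l = j then 1 else 0) + (if l + 1 = a \<and> j + 1 = b then 1 else 0)))"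
    using M ij by (simp add: scalar_prod_def elem_mat_def lessThan_atLeast0)
  also have "\<dots> = (\<Sum>l<d. (if l = j then M $$ (i, l) else 0)) + (\<Sum>l<d. (if l = a - 1 then (if j + 1 = b then M $$ (i, l) else 0) else 0))"
    unfolding sum.distrib[symmetric]
    by (rule sum.cong) (use a in auto)
  also have "\<dots> = M $$ (i, j) + (if j + 1 = b then M $$ (i, a - 1) else 0)"
    using ij a by (auto simp: sum.delta')
  finally show ?thesis .
qed

lemma Vhat_snoc: "Vhat d (L @ [(a, b)]) = Vhat d L * (1\<^sub>m d + elem_mat d a b)"
  unfolding Vhat_def by simp

lemma Vhat_inv:
  assumes "\<forall>(a, b) \<in> set L. a \<in> {1..d} \<and> b \<in> {1..d}"
  shows "Vhat d L \<in> carrier_mat d d \<and> (\<forall>i<d. Vhat d L $$ (i, i) \<ge> 1) \<and>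
     (\<forall>(a, b) \<in> set L. csum (Vhat d L) d (b - 1) \<ge> 2 \<and> rsum (Vhat d L) d (a - 1) \<ge> 2)"
  using assms
proof (induction L rule: rev_induct)
  case Nil
  then show ?case by (simp add: Vhat_def)
next
  case (snoc x L)
  obtain a b where x: "x = (a, b)" by force
  have ab: "a \<in> {1..d}" "b \<in> {1..d}" using snoc.prems x by auto
  have IH: "Vhat d L \<in> carrier_mat d d" "\<forall>i<d. Vhat d L $$ (i, i) \<ge> 1"
     "\<forall>(a, b) \<in> set L. csum (Vhat d L) d (b - 1) \<ge> 2 \<and> rsum (Vhat d L) d (a - 1) \<ge> 2"
    using snoc by auto
  define M where "M = Vhat d L"
  define M' where "M' = Vhat d (L @ [x])"
  have M: "M \<in> carrier_mat d d" using IH M_def by simp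
  have M'eq: "M' = M * (1\<^sub>m d + elem_mat d a b)" unfolding M'_def M_def x Vhat_snoc ..
  have M': "M' \<in> carrier_mat d d" using M unfolding M'eq by (simp add: elem_mat_def)
  have ent: "\<And>i j. i < d \<Longrightarrow> j < d \<Longrightarrow> M' $$ (i, j) = M $$ (i, j) + (if j + 1 = b then M $$ (i, a - 1) else 0)"
    unfolding M'eq using step_entry[OF M ab(1)] by blast
  have mono: "\<And>i j. i < d \<Longrightarrow> j < d \<Longrightarrow> M $$ (i, j) \<le> M' $$ (i, j)" using ent by simp
  have diag: "\<forall>i<d. M' $$ (i, i) \<ge> 1" using IH(2) mono unfolding M_def by (meson order_trans)
  have cmono: "csum M d j \<le> csum M' d j" if "j < d" for j
    unfolding csum_def by (rule sum_mono) (use mono that in auto)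
  have rmono: "rsum M d i \<le> rsum M' d i" if "i < d" for i
    unfolding rsum_def by (rule sum_mono) (use mono that in auto)
  have a1: "a - 1 < d" "b - 1 < d" using ab by auto
  have dga: "M $$ (a - 1, a - 1) \<ge> 1" "M $$ (b - 1, b - 1) \<ge> 1" using IH(2) a1 unfolding M_def by auto
  have "csum M' d (b - 1) = (\<Sum>i<d. M $$ (i, b - 1) + M $$ (i, a - 1))"
    unfolding csum_def by (rule sum.cong) (use ent a1 ab in auto)
  also have "\<dots> = csum M d (b - 1) + csum M d (a - 1)" unfolding csum_def by (simp add: sum.distrib)
  also have "\<dots> \<ge> M $$ (b - 1, b - 1) + M $$ (a - 1, a - 1)"
    unfolding csum_def by (intro add_mono member_le_sum) (use a1 in auto)
  finally have c2: "csum M' d (b - 1) \<ge> 2" using dga by simp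
  have "rsum M' d (a - 1) = (\<Sum>j<d. M $$ (a - 1, j) + (if j = b - 1 then M $$ (a - 1, a - 1) else 0))"
    unfolding rsum_def by (rule sum.cong) (use ent a1 ab in auto)
  also have "\<dots> = rsum M d (a - 1) + M $$ (a - 1, a - 1)" unfolding rsum_def
    using a1 by (simp add: sum.distrib sum.delta')
  also have "\<dots> \<ge> M $$ (a - 1, a - 1) + M $$ (a - 1, a - 1)"
    unfolding rsum_def by (intro add_mono member_le_sum) (use a1 in auto)
  finally have r2: "rsum M' d (a - 1) \<ge> 2" using dga by simp
  have old: "\<forall>(a, b) \<in> set L. csum M' d (b - 1) \<ge> 2 \<and> rsum M' d (a - 1) \<ge> 2"
  proof (intro ballI, clarify)
    fix a' b' assume m: "(a', b') \<in> set L"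
    hence r: "a' \<in> {1..d}" "b' \<in> {1..d}" using snoc.prems by auto
    show "csum M' d (b' - 1) \<ge> 2 \<and> rsum M' d (a' - 1) \<ge> 2"
      using IH(3) m cmono[of "b' - 1"] rmono[of "a' - 1"] r unfolding M_def by fastforce
  qed
  show ?case using M' diag c2 r2 old x unfolding M'_def by auto
qed

lemma perm_entry:
  assumes W: "W \<in> carrier_mat d d" and pt: "pt permutes {1..d}" and ij: "i < d" "j < d"
  shows "(W * perm_matrix d pt) $$ (i, j) = W $$ (i, inv_into UNIV pt (j + 1) - 1)"
proof -
  have j1: "j + 1 \<in> {1..d}" using ij by simp
  have g: "inv_into UNIV pt (j + 1) \<in> {1..d}" unfolding permutes_in_image[OF permutes_inv[OF pt]] by (rule j1)
  have "(W * perm_matrix d pt) $$ (i, j) = (\<Sum>l<d. W $$ (i, l) * (if j + 1 = pt (l + 1) then 1 else 0))"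
    using W ij by (simp add: scalar_prod_def perm_matrix_def lessThan_atLeast0)
  also have "\<dots> = (\<Sum>l<d. if l = inv_into UNIV pt (j + 1) - 1 then W $$ (i, l) else 0)"
  proof (rule sum.cong)
    fix l assume l: "l \<in> {..<d}"
    have "(j + 1 = pt (l + 1)) \<longleftrightarrow> (inv_into UNIV pt (j + 1) = l + 1)"
      using permutes_inv_eq[OF pt, of "j+1" "l+1"] by auto
    also have "\<dots> \<longleftrightarrow> l = inv_into UNIV pt (j + 1) - 1" using g by auto
    finally show "W $$ (i, l) * (if j + 1 = pt (l + 1) then 1 else 0) = (if l = inv_into UNIV pt (j + 1) - 1 then W $$ (i, l) else 0)"
      by simp
  qed simp
  also have "\<dots> = W $$ (i, inv_into UNIV pt (j + 1) - 1)" using g by (auto simp: sum.delta')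
  finally show ?thesis .
qed

lemma perm_bij:
  assumes pt: "pt permutes {1..(d::nat)}"
  shows "bij_betw (\<lambda>j. inv_into UNIV pt (j + 1) - 1) {..<d} {..<d}"
proof (rule bij_betw_byWitness[where f' = "\<lambda>l. pt (l + 1) - 1"])
  have g: "inv_into UNIV pt (j + 1) \<in> {1..d}" if "j < d" for j
    unfolding permutes_in_image[OF permutes_inv[OF pt]] using that by auto
  have h: "pt (l + 1) \<in> {1..d}" if "l < d" for l
    unfolding permutes_in_image[OF pt] using that by auto
  show "\<forall>a\<in>{..<d}. pt (inv_into UNIV pt (a + 1) - 1 + 1) - 1 = a"
  proof
    fix a assume "a \<in> {..<d}"
    hence x: "inv_into UNIV pt (a + 1) \<ge> 1" using g by auto
    have "inv_into UNIV pt (a + 1) - 1 + 1 = inv_into UNIV pt (a + 1)" using x by simp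
    then show "pt (inv_into UNIV pt (a + 1) - 1 + 1) - 1 = a" using permutes_inverses(1)[OF pt] by simp
  qed
  show "\<forall>a\<in>{..<d}. inv_into UNIV pt (pt (a + 1) - 1 + 1) - 1 = a"
  proof
    fix a assume "a \<in> {..<d}"
    hence x: "pt (a + 1) \<ge> 1" using h by auto
    have "pt (a + 1) - 1 + 1 = pt (a + 1)" using x by simp
    then show "inv_into UNIV pt (pt (a + 1) - 1 + 1) - 1 = a" using permutes_inverses(2)[OF pt] by simp
  qed
  show "(\<lambda>j. inv_into UNIV pt (j + 1) - 1) ` {..<d} \<subseteq> {..<d}" using g by force
  show "(\<lambda>l. pt (l + 1) - 1) ` {..<d} \<subseteq> {..<d}" using h by force
qed

lemma pow_csum:
  assumes V: "V \<in> carrier_mat d d" and c: "\<forall>j<d. csum V d j \<ge> 2"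
  shows "\<forall>j<d. csum (V ^\<^sub>m k) d j \<ge> 2 ^ k"
proof (induction k)
  case 0
  show ?case
  proof (intro allI impI)
    fix j assume j: "j < d"
    have "csum (V ^\<^sub>m 0) d j = (\<Sum>i<d. if i = j then 1 else 0)" unfolding csum_def
      by (rule sum.cong) (use j V in auto)
    also have "\<dots> = 1" using j by (simp add: sum.delta')
    finally show "csum (V ^\<^sub>m 0) d j \<ge> 2 ^ 0" by simp
  qed
next
  case (Suc k)
  show ?case
  proof (intro allI impI)
    fix j assume j: "j < d"
    have Pk: "V ^\<^sub>m k \<in> carrier_mat d d" using V by auto
    have "csum (V ^\<^sub>m Suc k) d j = (\<Sum>i<d. \<Sum>l<d. (V ^\<^sub>m k) $$ (i, l) * V $$ (l, j))"
      unfolding csum_def by (rule sum.cong) (use j V Pk in \<open>auto simp: scalar_prod_def lessThan_atLeast0\<close>)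
    also have "\<dots> = (\<Sum>l<d. csum (V ^\<^sub>m k) d l * V $$ (l, j))"
      unfolding csum_def by (subst sum.swap) (simp add: sum_distrib_right)
    also have "\<dots> \<ge> (\<Sum>l<d. 2 ^ k * V $$ (l, j))"
      by (rule sum_mono) (use Suc in auto)
    finally have "csum (V ^\<^sub>m Suc k) d j \<ge> 2 ^ k * csum V d j"
      unfolding csum_def by (simp add: sum_distrib_left)
    moreover have "2 ^ k * csum V d j \<ge> 2 ^ k * 2" using c j by simp
    ultimately show "csum (V ^\<^sub>m Suc k) d j \<ge> 2 ^ Suc k"
      by (metis (no_types) order_trans power_Suc mult.commute)
  qed
qed

lemma pow_rsum:
  assumes V: "V \<in> carrier_mat d d" and c: "\<forall>j<d. rsum V d j \<ge> 2"
  shows "\<forall>i<d. rsum (V ^\<^sub>m k) d i \<ge> 2 ^ k"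
proof (induction k)
  case 0
  show ?case
  proof (intro allI impI)
    fix j assume j: "j < d"
    have "rsum (V ^\<^sub>m 0) d j = (\<Sum>i<d. if i = j then 1 else 0)" unfolding rsum_def
      by (rule sum.cong) (use j V in auto)
    also have "\<dots> = 1" using j by (simp add: sum.delta')
    finally show "rsum (V ^\<^sub>m 0) d j \<ge> 2 ^ 0" by simp
  qed
next
  case (Suc k)
  show ?case
  proof (intro allI impI)
    fix i assume i: "i < d"
    have Pk: "V ^\<^sub>m k \<in> carrier_mat d d" using V by auto
    have "rsum (V ^\<^sub>m Suc k) d i = (\<Sum>j<d. \<Sum>l<d. (V ^\<^sub>m k) $$ (i, l) * V $$ (l, j))"
      unfolding rsum_def by (rule sum.cong) (use i V Pk in \<open>auto simp: scalar_prod_def lessThan_atLeast0\<close>)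
    also have "\<dots> = (\<Sum>l<d. (V ^\<^sub>m k) $$ (i, l) * rsum V d l)"
      unfolding rsum_def by (subst sum.swap) (simp add: sum_distrib_left)
    also have "\<dots> \<ge> (\<Sum>l<d. (V ^\<^sub>m k) $$ (i, l) * 2)"
      by (rule sum_mono) (use c in auto)
    finally have "rsum (V ^\<^sub>m Suc k) d i \<ge> rsum (V ^\<^sub>m k) d i * 2"
      unfolding rsum_def by (simp add: sum_distrib_right)
    moreover have "rsum (V ^\<^sub>m k) d i * 2 \<ge> 2 ^ k * 2" using Suc i by simp
    ultimately show "rsum (V ^\<^sub>m Suc k) d i \<ge> 2 ^ Suc k" by simp
  qed
qed

lemma exists_big:
  fixes f :: "nat \<Rightarrow> nat"
  assumes "d > 0"
  shows "\<exists>j<d. (\<Sum>l<d. f l) \<le> d * f j"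
proof -
  define K where "K = Max (f ` {..<d})"
  have "K \<in> f ` {..<d}" unfolding K_def using assms by (intro Max_in) auto
  then obtain j where j: "j < d" "f j = K" by auto
  have "(\<Sum>l<d. f l) \<le> of_nat (card {..<d}) * K"
    by (rule sum_bounded_above) (auto simp: K_def)
  then show ?thesis using j by auto
qed


theorem proposition4p2:
  fixes d :: nat and p :: "nat \<Rightarrow> nat" and ts :: "move list"
  assumes "d \<ge> 2"
    and "closed_reduced_path d p ts"
    and "primitive_mat (V_mat d p ts)"
    and "\<exists>PI. is_lift_start d p PI \<and>
           ((\<forall>c \<in> {1..d}. c \<in> snd ` set (path_labels d PI ts)) \<or>
            (\<forall>c \<in> {1..d}. c \<in> fst ` set (path_labels d PI ts)))"
  shows "pf_eigenvalue (V_mat d p ts) \<ge> 2"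
proof -
  have d1: "d \<ge> 1" and d0: "d > 0" using assms(1) by auto
  have p: "p permutes {1..d}" using assms(2) unfolding closed_reduced_path_def by auto
  have l0: "is_lperm d (id, p)" using p unfolding is_lperm_def by simp
  obtain PI where lift: "is_lift_start d p PI" and cov:
    "(\<forall>c \<in> {1..d}. c \<in> snd ` set (path_labels d PI ts)) \<or>
     (\<forall>c \<in> {1..d}. c \<in> fst ` set (path_labels d PI ts))" using assms(4) by blast
  obtain pt pb where P: "PI = (pt, pb)" by force
  have lP: "is_lperm d (pt, pb)" and red: "pb \<circ> inv_into UNIV pt = p"
    using lift unfolding P is_lift_start_def reduce_def by auto
  have pt: "pt permutes {1..d}" using lP unfolding is_lperm_def by simp
  define s where "s = inv_into UNIV pt"
  have s: "s permutes {1..d}" unfolding s_def by (rule permutes_inv[OF pt])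
  have idp: "(pt \<circ> s, pb \<circ> s) = (id, p)" using red permutes_inv_o(1)[OF pt] unfolding s_def by simp
  have invs: "inv_into UNIV s = pt" unfolding s_def by (rule permutes_inv_inv[OF pt])
  define L where "L = path_labels d (id, p) ts"
  define LP where "LP = path_labels d (pt, pb) ts"
  have Leq: "L = map (map_prod pt pt) LP"
    using labels_relabel[OF d1 s lP, of ts] unfolding L_def LP_def idp invs .
  have inr: "\<forall>(a, b) \<in> set L. a \<in> {1..d} \<and> b \<in> {1..d}"
    using labels_in[OF d1 l0] unfolding L_def by blast
  have sinv: "\<And>c. c \<in> {1..d} \<Longrightarrow> s c \<in> {1..d}" using permutes_in_image[OF s] by blast
  have ptsc: "\<And>c. pt (s c) = c" unfolding s_def using permutes_inverses(1)[OF pt] .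
  have cov': "(\<forall>c \<in> {1..d}. c \<in> snd ` set L) \<or> (\<forall>c \<in> {1..d}. c \<in> fst ` set L)"
  proof (cases "\<forall>c \<in> {1..d}. c \<in> snd ` set LP")
    case True
    have "\<forall>c \<in> {1..d}. c \<in> snd ` set L"
    proof
      fix c assume c: "c \<in> {1..d}"
      then obtain a where "(a, s c) \<in> set LP" using True sinv by force
      hence "(pt a, pt (s c)) \<in> set L" unfolding Leq by force
      thus "c \<in> snd ` set L" using ptsc by force
    qed
    thus ?thesis ..
  next
    case False
    hence F: "\<forall>c \<in> {1..d}. c \<in> fst ` set LP" using cov unfolding P LP_def by blast
    have "\<forall>c \<in> {1..d}. c \<in> fst ` set L"
    proof
      fix c assume c: "c \<in> {1..d}"
      then obtain b where "(s c, b) \<in> set LP" using F sinv by force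
      hence "(pt (s c), pt b) \<in> set L" unfolding Leq by force
      thus "c \<in> fst ` set L" using ptsc by force
    qed
    thus ?thesis ..
  qed
  define W where "W = Vhat d L"
  note inv = Vhat_inv[OF inr, folded W_def]
  have W: "W \<in> carrier_mat d d" using inv by simp
  define q where "q = fst (path_end d (id, p) ts)"
  have q: "q permutes {1..d}" using path_end_lperm[OF d1 l0, of ts] unfolding q_def is_lperm_def
    by (cases "path_end d (id, p) ts") auto
  define V where "V = V_mat d p ts"
  have Veq: "V = W * perm_matrix d q" unfolding V_def V_mat_def W_def L_def q_def ..
  have V: "V \<in> carrier_mat d d" unfolding Veq using W by (simp add: perm_matrix_def)
  have ent: "\<And>i j. i < d \<Longrightarrow> j < d \<Longrightarrow> V $$ (i, j) = W $$ (i, inv_into UNIV q (j + 1) - 1)"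
    unfolding Veq by (rule perm_entry[OF W q])
  have grow: "\<forall>k. \<exists>i<d. \<exists>j<d. (2::real) ^ k \<le> real d * real ((V ^\<^sub>m k) $$ (i, j))"
    using cov'
  proof
    assume c: "\<forall>c \<in> {1..d}. c \<in> snd ` set L"
    have "\<forall>j<d. csum V d j \<ge> 2"
    proof (intro allI impI)
      fix j assume j: "j < d"
      have g: "inv_into UNIV q (j + 1) \<in> {1..d}"
        unfolding permutes_in_image[OF permutes_inv[OF q]] using j by auto
      then obtain a where ab: "(a, inv_into UNIV q (j + 1)) \<in> set L" using c by force
      have "csum V d j = csum W d (inv_into UNIV q (j + 1) - 1)"
        unfolding csum_def by (rule sum.cong) (use ent j in auto)
      also have "\<dots> \<ge> 2" using inv ab by auto
      finally show "csum V d j \<ge> 2" .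
    qed
    note pca = pow_csum[OF V this]
    show ?thesis
    proof (intro allI)
      fix k have pc: "\<forall>j<d. 2 ^ k \<le> csum (V ^\<^sub>m k) d j" by (rule pca)
      from exists_big[OF d0, of "\<lambda>i. (V ^\<^sub>m k) $$ (i, 0)"] obtain i where
        i: "i < d" "csum (V ^\<^sub>m k) d 0 \<le> d * (V ^\<^sub>m k) $$ (i, 0)" unfolding csum_def by auto
      have "2 ^ k \<le> d * (V ^\<^sub>m k) $$ (i, 0)" using pc d0 i(2) by (meson le_trans)
      hence "(2::real) ^ k \<le> real d * real ((V ^\<^sub>m k) $$ (i, 0))"
        by (metis of_nat_le_iff of_nat_mult of_nat_numeral of_nat_power)
      thus "\<exists>i<d. \<exists>j<d. (2::real) ^ k \<le> real d * real ((V ^\<^sub>m k) $$ (i, j))" using i(1) d0 by blast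
    qed
  next
    assume c: "\<forall>c \<in> {1..d}. c \<in> fst ` set L"
    have "\<forall>i<d. rsum V d i \<ge> 2"
    proof (intro allI impI)
      fix i assume i: "i < d"
      then obtain b where ab: "(i + 1, b) \<in> set L" using c by force
      have "rsum V d i = (\<Sum>j<d. W $$ (i, inv_into UNIV q (j + 1) - 1))"
        unfolding rsum_def by (rule sum.cong) (use ent i in auto)
      also have "\<dots> = rsum W d i" unfolding rsum_def
        by (rule sum.reindex_bij_betw[OF perm_bij[OF q], of "\<lambda>l. W $$ (i, l)"])
      also have "\<dots> \<ge> 2" using inv ab by fastforce
      finally show "rsum V d i \<ge> 2" .
    qed
    note pca = pow_rsum[OF V this]
    show ?thesis
    proof (intro allI)
      fix k have pc: "\<forall>i<d. 2 ^ k \<le> rsum (V ^\<^sub>m k) d i" by (rule pca)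
      from exists_big[OF d0, of "\<lambda>j. (V ^\<^sub>m k) $$ (0, j)"] obtain j where
        j: "j < d" "rsum (V ^\<^sub>m k) d 0 \<le> d * (V ^\<^sub>m k) $$ (0, j)" unfolding rsum_def by auto
      have "2 ^ k \<le> d * (V ^\<^sub>m k) $$ (0, j)" using pc d0 j(2) by (meson le_trans)
      hence "(2::real) ^ k \<le> real d * real ((V ^\<^sub>m k) $$ (0, j))"
        by (metis of_nat_le_iff of_nat_mult of_nat_numeral of_nat_power)
      thus "\<exists>i<d. \<exists>j<d. (2::real) ^ k \<le> real d * real ((V ^\<^sub>m k) $$ (i, j))" using j(1) d0 by blast
    qed
  qed
  show ?thesis using sr_ge[OF V d0 grow] unfolding pf_eigenvalue_def V_def .
qed

end
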